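(* Let $k\ge 2$ be an integer and let $d_1\ge d_2\ge\cdots\ge d_k\ge 2$ be integers. If $r\ge d_1+k-1$, then for all sufficiently large $n$, $$ex\Big(n,K_r,\bigcup_{i=1}^k S_{d_i}\Big)\le \max_{1\le i\le k}\left\{\frac{d_i-1}{r-i+1}(n-i+1)\right\}.$$
   Context: $S_\ell$ denotes the star $K_{1,\ell}$ with $\ell$ edges, and $\bigcup_{i=1}^k S_{d_i}$ denotes the star forest that is the vertex-disjoint union of $S_{d_1},\dots,S_{d_k}$. For graphs $H$ and $F$, the generalized Turán number $ex(n,H,F)$ is the maximum number of copies of $H$ in an $n$-vertex graph containing no copy of $F$ as a subgraph; $K_r$ is the complete graph on $r$ vertices. *)

theory Defs
  imports Complex_Main
begin

definition graphs_on :: "nat \<Rightarrow> nat set set set" where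
  "graphs_on n = {E. \<forall>e\<in>E. e \<subseteq> {0..<n} \<and> card e = 2}"

definition num_cliques :: "nat \<Rightarrow> nat set set \<Rightarrow> nat \<Rightarrow> nat" where
  "num_cliques n E r = card {S. S \<subseteq> {0..<n} \<and> card S = r \<and>
       (\<forall>x\<in>S. \<forall>y\<in>S. x \<noteq> y \<longrightarrow> {x, y} \<in> E)}"

definition contains_star_forest :: "nat set set \<Rightarrow> nat \<Rightarrow> (nat \<Rightarrow> nat) \<Rightarrow> bool" where
  "contains_star_forest E k d \<longleftrightarrow>
     (\<exists>c L. inj_on c {1..k} \<and>
        (\<forall>i\<in>{1..k}. finite (L i) \<and> card (L i) = d i \<and> (\<forall>x\<in>L i. {c i, x} \<in> E)) \<and>
        (\<forall>i\<in>{1..k}. \<forall>j\<in>{1..k}. c i \<notin> L j) \<and>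
        (\<forall>i\<in>{1..k}. \<forall>j\<in>{1..k}. i \<noteq> j \<longrightarrow> L i \<inter> L j = {}))"

definition ex_clique_starforest :: "nat \<Rightarrow> nat \<Rightarrow> nat \<Rightarrow> (nat \<Rightarrow> nat) \<Rightarrow> nat" where
  "ex_clique_starforest n r k d =
     Max {num_cliques n E r | E. E \<in> graphs_on n \<and> \<not> contains_star_forest E k d}"

end

theory Submission imports Defs begin

definition nbr :: "nat set set \<Rightarrow> nat \<Rightarrow> nat set" where
  "nbr E v = {x. {v, x} \<in> E}"

lemma nbr_sub: assumes "E \<in> graphs_on n" shows "nbr E v \<subseteq> {0..<n}"
proof
  fix x assume "x \<in> nbr E v"
  then have "{v,x} \<in> E" by (simp add: nbr_def)
  then have "{v,x} \<subseteq> {0..<n}" using assms unfolding graphs_on_def by blast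
  then show "x \<in> {0..<n}" by simp
qed

lemma nbr_fin: assumes "E \<in> graphs_on n" shows "finite (nbr E v)"
  using nbr_sub[OF assms, of v] by (rule finite_subset) simp

lemma nbr_noloop: assumes "E \<in> graphs_on n" shows "v \<notin> nbr E v"
proof
  assume "v \<in> nbr E v"
  then have v: "{v} \<in> E" by (simp add: nbr_def)
  have "\<forall>e\<in>E. card e = 2" using assms unfolding graphs_on_def by simp
  then have "card {v} = 2" using v by (rule bspec)
  then show False by simp
qed

lemma completion_aux:
  assumes G: "E \<in> graphs_on n"
  and inj: "inj_on c {1..k}"
  shows "\<forall>J L. card ({1..k} - J) = t \<longrightarrow> J \<subseteq> {1..k} \<longrightarrow>
    (\<forall>i\<in>J. finite (L i) \<and> card (L i) = d i \<and> L i \<subseteq> nbr E (c i)) \<longrightarrow>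
    (\<forall>i\<in>J. \<forall>j\<in>{1..k}. c j \<notin> L i) \<longrightarrow>
    (\<forall>i\<in>J. \<forall>j\<in>J. i \<noteq> j \<longrightarrow> L i \<inter> L j = {}) \<longrightarrow>
    (\<forall>i\<in>{1..k}-J. k + (\<Sum>j\<in>{1..k}. d j) \<le> card (nbr E (c i))) \<longrightarrow>
    contains_star_forest E k d"
proof (induction t)
  case 0
  show ?case
  proof (intro allI impI)
    fix J L
    assume a: "card ({1..k} - J) = 0" "J \<subseteq> {1..k}"
      "\<forall>i\<in>J. finite (L i) \<and> card (L i) = d i \<and> L i \<subseteq> nbr E (c i)"
      "\<forall>i\<in>J. \<forall>j\<in>{1..k}. c j \<notin> L i"
      "\<forall>i\<in>J. \<forall>j\<in>J. i \<noteq> j \<longrightarrow> L i \<inter> L j = {}"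
    have "J = {1..k}" using a(1,2) by auto
    then show "contains_star_forest E k d"
      unfolding contains_star_forest_def using a inj
      by (intro exI[of _ c] exI[of _ L]) (auto simp: nbr_def)
  qed
next
  case (Suc t)
  show ?case
  proof (intro allI impI)
    fix J L
    assume a: "card ({1..k} - J) = Suc t" "J \<subseteq> {1..k}"
      "\<forall>i\<in>J. finite (L i) \<and> card (L i) = d i \<and> L i \<subseteq> nbr E (c i)"
      "\<forall>i\<in>J. \<forall>j\<in>{1..k}. c j \<notin> L i"
      "\<forall>i\<in>J. \<forall>j\<in>J. i \<noteq> j \<longrightarrow> L i \<inter> L j = {}"
      "\<forall>i\<in>{1..k}-J. k + (\<Sum>j\<in>{1..k}. d j) \<le> card (nbr E (c i))"
    obtain a0 where a0: "a0 \<in> {1..k} - J" using a(1)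
      by (metis card.empty ex_in_conv nat.distinct(1))
    define X where "X = nbr E (c a0) - c ` {1..k} - (\<Union>j\<in>J. L j)"
    have finJ: "finite J" using a(2) finite_subset by blast
    have c1: "card (c ` {1..k}) \<le> k" using card_image_le[of "{1..k}" c] by simp
    have c2: "card (\<Union>j\<in>J. L j) \<le> (\<Sum>j\<in>J. d j)"
      using card_UN_le[OF finJ, of L] a(3) by simp
    have c3: "(\<Sum>j\<in>J. d j) + d a0 \<le> (\<Sum>j\<in>{1..k}. d j)"
    proof -
      have "(\<Sum>j\<in>J. d j) + d a0 = (\<Sum>j\<in>insert a0 J. d j)" using a0 finJ by simp
      also have "\<dots> \<le> (\<Sum>j\<in>{1..k}. d j)" using a0 a(2) by (intro sum_mono2) auto
      finally show ?thesis .
    qed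
    have "card (nbr E (c a0)) - card (c ` {1..k}) - card (\<Union>j\<in>J. L j) \<le> card X"
    proof -
      have f1: "finite (c ` {1..k})" by simp
      have f2: "finite (\<Union>j\<in>J. L j)" using finJ a(3) by blast
      have "card (nbr E (c a0)) - card (c ` {1..k}) \<le> card (nbr E (c a0) - c ` {1..k})"
        using diff_card_le_card_Diff[OF f1] .
      moreover have "card (nbr E (c a0) - c ` {1..k}) - card (\<Union>j\<in>J. L j) \<le> card X"
        unfolding X_def using diff_card_le_card_Diff[OF f2] .
      ultimately show ?thesis by linarith
    qed
    moreover have "k + (\<Sum>j\<in>{1..k}. d j) \<le> card (nbr E (c a0))" using a(6) a0 by blast
    ultimately have "d a0 \<le> card X" using c1 c2 c3 by linarith
    then obtain A where A: "A \<subseteq> X" "card A = d a0" "finite A"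
      by (meson obtain_subset_with_card_n)
    define L' where "L' = L(a0 := A)"
    have m1: "card ({1..k} - insert a0 J) = t" using a(1) a0
      by (metis Diff_insert card_Diff_singleton diff_Suc_1 finite_Diff finite_atLeastAtMost)
    have m2: "insert a0 J \<subseteq> {1..k}" using a0 a(2) by auto
    have AX: "A \<inter> c ` {1..k} = {}" "\<And>j. j \<in> J \<Longrightarrow> A \<inter> L j = {}" "A \<subseteq> nbr E (c a0)"
      using A(1) unfolding X_def by auto
    have La0: "L' a0 = A" and Lo: "\<And>i. i \<noteq> a0 \<Longrightarrow> L' i = L i" unfolding L'_def by auto
    have m3: "\<forall>i\<in>insert a0 J. finite (L' i) \<and> card (L' i) = d i \<and> L' i \<subseteq> nbr E (c i)"
    proof
      fix i assume i: "i \<in> insert a0 J"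
      show "finite (L' i) \<and> card (L' i) = d i \<and> L' i \<subseteq> nbr E (c i)"
      proof (cases "i = a0")
        case True then show ?thesis using La0 A AX by simp
      next
        case False then show ?thesis using Lo[OF False] i a(3) by simp
      qed
    qed
    have m4: "\<forall>i\<in>insert a0 J. \<forall>j\<in>{1..k}. c j \<notin> L' i"
    proof (intro ballI)
      fix i j assume i: "i \<in> insert a0 J" and j: "j \<in> {1..k}"
      show "c j \<notin> L' i"
      proof (cases "i = a0")
        case True then show ?thesis using La0 AX(1) j by blast
      next
        case False then show ?thesis using Lo[OF False] i j a(4) by simp
      qed
    qed
    have m5: "\<forall>i\<in>insert a0 J. \<forall>j\<in>insert a0 J. i \<noteq> j \<longrightarrow> L' i \<inter> L' j = {}"
    proof (intro ballI impI)
      fix i j assume i: "i \<in> insert a0 J" and j: "j \<in> insert a0 J" and ij: "i \<noteq> j"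
      show "L' i \<inter> L' j = {}"
      proof (cases "i = a0")
        case True
        then have "j \<in> J" "j \<noteq> a0" using j ij by auto
        then show ?thesis using True La0 Lo AX(2) by simp
      next
        case False
        note iF = False
        show ?thesis
        proof (cases "j = a0")
          case True
          then have "i \<in> J" using i iF by auto
          then show ?thesis using True La0 Lo[OF iF] AX(2) by blast
        next
          case False
          then show ?thesis using iF Lo i j ij a(5) by simp
        qed
      qed
    qed
    have m6: "\<forall>i\<in>{1..k}-insert a0 J. k + (\<Sum>j\<in>{1..k}. d j) \<le> card (nbr E (c i))"
      using a(6) by auto
    show "contains_star_forest E k d"
      using Suc.IH[THEN spec[of _ "insert a0 J"], THEN spec[of _ L'], THEN mp, OF m1, THEN mp, OF m2,
        THEN mp, OF m3, THEN mp, OF m4, THEN mp, OF m5, THEN mp, OF m6] .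
  qed
qed

lemma completion:
  assumes G: "E \<in> graphs_on n"
  and inj: "inj_on c {1..k}"
  and "J \<subseteq> {1..k}"
  and "\<forall>i\<in>J. finite (L i) \<and> card (L i) = d i \<and> L i \<subseteq> nbr E (c i)"
  and "\<forall>i\<in>J. \<forall>j\<in>{1..k}. c j \<notin> L i"
  and "\<forall>i\<in>J. \<forall>j\<in>J. i \<noteq> j \<longrightarrow> L i \<inter> L j = {}"
  and "\<forall>i\<in>{1..k}-J. k + (\<Sum>j\<in>{1..k}. d j) \<le> card (nbr E (c i))"
  shows "contains_star_forest E k d"
  using completion_aux[OF G inj, of "card ({1..k} - J)" d, THEN spec[of _ J], THEN spec[of _ L],
     THEN mp, OF refl, THEN mp, OF assms(3), THEN mp, OF assms(4), THEN mp, OF assms(5),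
     THEN mp, OF assms(6), THEN mp, OF assms(7)] .


definition cliq :: "nat \<Rightarrow> nat set set \<Rightarrow> nat \<Rightarrow> nat set set" where
  "cliq n E r = {S. S \<subseteq> {0..<n} \<and> card S = r \<and> (\<forall>x\<in>S. \<forall>y\<in>S. x \<noteq> y \<longrightarrow> {x, y} \<in> E)}"

lemma num_cliques_eq: "num_cliques n E r = card (cliq n E r)"
  unfolding num_cliques_def cliq_def by simp

lemma cliq_fin: "finite (cliq n E r)"
proof -
  have "cliq n E r \<subseteq> Pow {0..<n}" unfolding cliq_def by auto
  then show ?thesis by (rule finite_subset) simp
qed

lemma cliq_nbr: assumes "S \<in> cliq n E r" "v \<in> S" shows "S - {v} \<subseteq> nbr E v"
  using assms unfolding cliq_def nbr_def by auto

lemma case_eq: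
  fixes n k r :: nat and d :: "nat \<Rightarrow> nat" and E D B
  defines "D \<equiv> k + (\<Sum>j\<in>{1..k}. d j)"
  defines "B \<equiv> {v\<in>{0..<n}. D \<le> card (nbr E v)}"
  assumes G: "E \<in> graphs_on n" and nc: "\<not> contains_star_forest E k d"
    and k2: "k \<ge> 2" and cB: "card B = k - 1" and dk: "d k \<ge> 2" and d1: "d k \<le> d 1"
    and r: "r \<ge> d 1 + k - 1"
  shows "card (cliq n E r) * d k \<le> n - (k - 1) \<and> (cliq n E r \<noteq> {} \<longrightarrow> r = d k + k - 1)"
proof -
  have finB: "finite B" unfolding B_def by simp
  have Bsub: "B \<subseteq> {0..<n}" unfolding B_def by auto
  obtain b where b: "bij_betw b {1..k-1} B" using ex_bij_betw_nat_finite_1[OF finB] cB by auto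
  have small: "card (nbr E v - B) < d k" if v: "v \<in> {0..<n}" "v \<notin> B" for v
  proof (rule ccontr)
    assume "\<not> ?thesis"
    then obtain A where A: "A \<subseteq> nbr E v - B" "card A = d k" "finite A"
      by (meson not_less obtain_subset_with_card_n)
    define c where "c = (\<lambda>i. if i = k then v else b i)"
    have inj: "inj_on c {1..k}"
    proof (rule inj_onI)
      fix i j assume i: "i \<in> {1..k}" and j: "j \<in> {1..k}" and e: "c i = c j"
      show "i = j"
      proof (cases "i = k")
        case True
        show ?thesis
        proof (rule ccontr)
          assume ij: "i \<noteq> j"
          then have "j \<in> {1..k-1}" using True j by auto
          then have "b j \<in> B" by (rule bij_betw_apply[OF b])
          then show False using e True ij v(2) unfolding c_def by auto
        qed
      next
        case False
        then have i': "i \<in> {1..k-1}" using i by auto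
        show ?thesis
        proof (cases "j = k")
          case True
          have "b i \<in> B" by (rule bij_betw_apply[OF b i'])
          then show ?thesis using e True False v(2) unfolding c_def by auto
        next
          case jF: False
          then have j': "j \<in> {1..k-1}" using j by auto
          have "b i = b j" using e False jF unfolding c_def by simp
          moreover have "inj_on b {1..k-1}" using b unfolding bij_betw_def by simp
          ultimately show ?thesis using i' j' unfolding inj_on_def by simp
        qed
      qed
    qed
    have "contains_star_forest E k d"
    proof (rule completion[OF G inj, of "{k}" "\<lambda>i. A"])
      show "{k} \<subseteq> {1..k}" using k2 by auto
      show "\<forall>i\<in>{k}. finite A \<and> card A = d i \<and> A \<subseteq> nbr E (c i)" using A unfolding c_def by auto
      show "\<forall>i\<in>{k}. \<forall>j\<in>{1..k}. c j \<notin> A"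
      proof (intro ballI)
        fix i j assume "i \<in> {k}" "j \<in> {1..k}"
        show "c j \<notin> A"
        proof (cases "j = k")
          case True then show ?thesis using A(1) nbr_noloop[OF G, of v] unfolding c_def by auto
        next
          case False
          then have "j \<in> {1..k-1}" using \<open>j \<in> {1..k}\<close> by auto
          then have "b j \<in> B" by (rule bij_betw_apply[OF b])
          then show ?thesis using A(1) False unfolding c_def by auto
        qed
      qed
      show "\<forall>i\<in>{k}. \<forall>j\<in>{k}. i \<noteq> j \<longrightarrow> A \<inter> A = {}" by simp
      show "\<forall>i\<in>{1..k}-{k}. k + (\<Sum>j\<in>{1..k}. d j) \<le> card (nbr E (c i))"
      proof
        fix i assume i: "i \<in> {1..k}-{k}"
        then have "i \<in> {1..k-1}" by auto
        then have "b i \<in> B" by (rule bij_betw_apply[OF b])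
        then show "k + (\<Sum>j\<in>{1..k}. d j) \<le> card (nbr E (c i))"
          using i unfolding c_def B_def D_def by auto
      qed
    qed
    then show False using nc by simp
  qed
  have cl: "B \<subseteq> S \<and> card (S - B) = d k \<and> r = d k + k - 1 \<and>
      (\<forall>w\<in>S-B. S - B = insert w (nbr E w - B))" if S: "S \<in> cliq n E r" for S
  proof -
    have Ssub: "S \<subseteq> {0..<n}" and cS: "card S = r" using S unfolding cliq_def by auto
    have finS: "finite S" using Ssub by (rule finite_subset) simp
    have a1: "card (S \<inter> B) \<le> k - 1" using card_mono[OF finB, of "S \<inter> B"] cB by simp
    have cSB: "card (S - B) = r - card (S \<inter> B)"
      using card_Diff_subset_Int[of S B] finS cS by simp
    have "card (S - B) > 0" using cSB a1 r dk d1 k2 by linarith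
    then obtain v where v: "v \<in> S - B" by (metis card.empty ex_in_conv less_irrefl)
    have "S - B - {v} \<subseteq> nbr E v - B" using cliq_nbr[OF S, of v] v by auto
    then have "card (S - B - {v}) \<le> card (nbr E v - B)"
      by (rule card_mono[OF finite_Diff[OF nbr_fin[OF G]]])
    moreover have "card (S - B - {v}) = card (S - B) - 1" using v finS by simp
    moreover have "card (nbr E v - B) < d k" using small[of v] v Ssub by auto
    ultimately have le: "card (S - B) \<le> d k" by linarith
    have e1: "card (S \<inter> B) = k - 1" and e2: "card (S - B) = d k" and e3: "r = d k + k - 1"
      using le cSB a1 r d1 k2 by linarith+
    have "S \<inter> B = B" using card_subset_eq[OF finB _ ] e1 cB by simp
    then have BS: "B \<subseteq> S" by blast
    have nb: "S - B = insert w (nbr E w - B)" if w: "w \<in> S - B" for w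
    proof -
      have sub: "S - B - {w} \<subseteq> nbr E w - B" using cliq_nbr[OF S, of w] w by auto
      have fn: "finite (nbr E w - B)" using nbr_fin[OF G] by simp
      have "card (nbr E w - B) < d k" using small[of w] w Ssub by auto
      moreover have "card (S - B - {w}) = d k - 1" using w finS e2 by simp
      ultimately have "card (nbr E w - B) \<le> card (S - B - {w})" by linarith
      then have "S - B - {w} = nbr E w - B" using card_seteq[OF fn sub] by simp
      then show ?thesis using w by blast
    qed
    show ?thesis using BS e2 e3 nb by blast
  qed
  define T where "T = (\<lambda>S. S - B) ` cliq n E r"
  have inj: "inj_on (\<lambda>S. S - B) (cliq n E r)"
  proof (rule inj_onI)
    fix S S' assume S: "S \<in> cliq n E r" and S': "S' \<in> cliq n E r" and e: "S - B = S' - B"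
    have "B \<subseteq> S" "B \<subseteq> S'" using cl[OF S] cl[OF S'] by auto
    then show "S = S'" using e by blast
  qed
  have cT: "card T = card (cliq n E r)" unfolding T_def using card_image[OF inj] .
  have pd: "pairwise disjnt T"
  proof (rule pairwiseI)
    fix X Y assume X: "X \<in> T" and Y: "Y \<in> T" and XY: "X \<noteq> Y"
    obtain S where S: "S \<in> cliq n E r" "X = S - B" using X unfolding T_def by auto
    obtain S' where S': "S' \<in> cliq n E r" "Y = S' - B" using Y unfolding T_def by auto
    show "disjnt X Y"
    proof (rule ccontr)
      assume "\<not> disjnt X Y"
      then obtain w where w: "w \<in> X" "w \<in> Y" unfolding disjnt_def by auto
      have "X = insert w (nbr E w - B)" using cl[OF S(1)] S(2) w(1) by auto
      moreover have "Y = insert w (nbr E w - B)" using cl[OF S'(1)] S'(2) w(2) by auto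
      ultimately show False using XY by simp
    qed
  qed
  have finT: "finite T" unfolding T_def using cliq_fin by simp
  have cardX: "card X = d k" and finX: "finite X" and subX: "X \<subseteq> {0..<n} - B" if X: "X \<in> T" for X
  proof -
    obtain S where S: "S \<in> cliq n E r" "X = S - B" using X unfolding T_def by auto
    show "card X = d k" using cl[OF S(1)] S(2) by simp
    have "S \<subseteq> {0..<n}" using S(1) unfolding cliq_def by simp
    then show "X \<subseteq> {0..<n} - B" using S(2) by blast
    then show "finite X" by (rule finite_subset) simp
  qed
  have "card (\<Union>T) = sum card T" using card_Union_disjoint[OF pd finX] by simp
  also have "\<dots> = card T * d k" using cardX by simp
  finally have u: "card (\<Union>T) = card T * d k" .
  have "\<Union>T \<subseteq> {0..<n} - B" using subX by blast
  then have "card (\<Union>T) \<le> card ({0..<n} - B)" by (rule card_mono[rotated]) simp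
  also have "\<dots> = n - (k - 1)" using card_Diff_subset[OF finB Bsub] cB by simp
  finally have part1: "card (cliq n E r) * d k \<le> n - (k - 1)" using u cT by simp
  have part2: "cliq n E r \<noteq> {} \<longrightarrow> r = d k + k - 1" using cl by blast
  show ?thesis using part1 part2 by blast
qed


lemma case_lt:
  fixes n k r :: nat and d :: "nat \<Rightarrow> nat" and E D B
  defines "D \<equiv> k + (\<Sum>j\<in>{1..k}. d j)"
  defines "B \<equiv> {v\<in>{0..<n}. D \<le> card (nbr E v)}"
  assumes G: "E \<in> graphs_on n" and nc: "\<not> contains_star_forest E k d"
    and k2: "k \<ge> 2" and cB: "card B < k - 1" and d1: "\<forall>j\<in>{1..k}. d j \<le> d 1"
    and r: "r \<ge> d 1 + k - 1"
  shows "card (cliq n E r) \<le> k * (D + 1) * 2 ^ (k + D)"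
proof -
  define m where "m = card B"
  have finB: "finite B" unfolding B_def by simp
  have Bsub: "B \<subseteq> {0..<n}" unfolding B_def by auto
  obtain b where b: "bij_betw b {1..m} B" using ex_bij_betw_nat_finite_1[OF finB] m_def by auto
  have bB: "b i \<in> B" if "i \<in> {1..m}" for i using bij_betw_apply[OF b that] .
  have binj: "inj_on b {1..m}" using b unfolding bij_betw_def by simp
  define Rem where "Rem = (\<lambda>S. S - B) ` cliq n E r"
  have finRem: "finite Rem" unfolding Rem_def using cliq_fin by simp
  have remP: "Q \<subseteq> {0..<n} - B \<and> finite Q \<and> d 1 + 1 \<le> card Q \<and> (\<forall>x\<in>Q. Q - {x} \<subseteq> nbr E x)"
    if Q: "Q \<in> Rem" for Q
  proof -
    obtain S where S: "S \<in> cliq n E r" "Q = S - B" using Q unfolding Rem_def by auto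
    have Ssub: "S \<subseteq> {0..<n}" and cS: "card S = r" using S(1) unfolding cliq_def by auto
    have finS: "finite S" using Ssub by (rule finite_subset) simp
    have a1: "card (S \<inter> B) \<le> m" using card_mono[OF finB, of "S \<inter> B"] m_def by simp
    have cSB: "card (S - B) = r - card (S \<inter> B)"
      using card_Diff_subset_Int[of S B] finS cS by simp
    have "d 1 + 1 \<le> card (S - B)" using cSB a1 r cB m_def by linarith
    then have "d 1 + 1 \<le> card Q" using S(2) by simp
    moreover have "Q \<subseteq> {0..<n} - B" using Ssub S(2) by blast
    moreover have "finite Q" using finS S(2) by simp
    moreover have "\<forall>x\<in>Q. Q - {x} \<subseteq> nbr E x" using cliq_nbr[OF S(1)] S(2) by blast
    ultimately show ?thesis by blast
  qed
  define Fam where "Fam = {QQ. QQ \<subseteq> Rem \<and> pairwise disjnt QQ}"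
  have finFam: "finite Fam"
  proof -
    have "Fam \<subseteq> Pow Rem" unfolding Fam_def by auto
    then show ?thesis by (rule finite_subset) (simp add: finRem)
  qed
  have "{} \<in> Fam" unfolding Fam_def by simp
  then have ne: "card ` Fam \<noteq> {}" by blast
  define M where "M = Max (card ` Fam)"
  have "M \<in> card ` Fam" unfolding M_def using Max_in[OF _ ne] finFam by simp
  then obtain QQ where QQ: "QQ \<in> Fam" "card QQ = M" by auto
  have Mmax: "card QQ' \<le> M" if "QQ' \<in> Fam" for QQ'
    unfolding M_def using Max_ge[of "card ` Fam" "card QQ'"] finFam that by simp
  have QQsub: "QQ \<subseteq> Rem" and QQpd: "pairwise disjnt QQ" using QQ(1) unfolding Fam_def by auto
  have finQQ: "finite QQ" using QQsub finRem by (rule finite_subset)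
  have disjQ: "Q1 \<inter> Q2 = {}" if "Q1 \<in> QQ" "Q2 \<in> QQ" "Q1 \<noteq> Q2" for Q1 Q2
    using QQpd that unfolding pairwise_def disjnt_def by blast
  have fewQ: "card QQ < k - m"
  proof (rule ccontr)
    assume "\<not> ?thesis"
    then obtain QQ' where QQ': "QQ' \<subseteq> QQ" "card QQ' = k - m" "finite QQ'"
      by (meson not_less obtain_subset_with_card_n)
    obtain g where g: "bij_betw g {1..k-m} QQ'" using ex_bij_betw_nat_finite_1[OF QQ'(3)] QQ'(2) by auto
    have ginj: "inj_on g {1..k-m}" using g unfolding bij_betw_def by simp
    have gQ: "g i \<in> QQ" "g i \<in> Rem" if "i \<in> {1..k-m}" for i
      using bij_betw_apply[OF g that] QQ'(1) QQsub by auto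
    define ctr where "ctr = (\<lambda>Q::nat set. SOME v. v \<in> Q)"
    define lv where "lv = (\<lambda>Q::nat set. \<lambda>t::nat. SOME A. A \<subseteq> Q - {ctr Q} \<and> card A = t \<and> finite A)"
    have ctrQ: "ctr Q \<in> Q" if "Q \<in> Rem" for Q
    proof -
      have "card Q > 0" using remP[OF that] by linarith
      then have "\<exists>v. v \<in> Q" by (metis card.empty ex_in_conv less_irrefl)
      then show ?thesis unfolding ctr_def by (rule someI_ex)
    qed
    have lvQ: "lv Q t \<subseteq> Q - {ctr Q} \<and> card (lv Q t) = t \<and> finite (lv Q t)" if "Q \<in> Rem" "t \<le> d 1" for Q t
    proof -
      have "card (Q - {ctr Q}) = card Q - 1" using ctrQ[OF that(1)] remP[OF that(1)] by simp
      then have "t \<le> card (Q - {ctr Q})" using remP[OF that(1)] that(2) by linarith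
      then have "\<exists>A. A \<subseteq> Q - {ctr Q} \<and> card A = t \<and> finite A"
        by (meson obtain_subset_with_card_n)
      then show ?thesis unfolding lv_def by (rule someI_ex)
    qed
    define c where "c = (\<lambda>i. if i \<le> m then b i else ctr (g (i - m)))"
    define L where "L = (\<lambda>i. lv (g (i - m)) (d i))"
    have im: "i - m \<in> {1..k-m}" if "i \<in> {1..k}" "\<not> i \<le> m" for i using that by auto
    have cout: "c i \<in> g (i - m)" "c i \<notin> B" if "i \<in> {1..k}" "\<not> i \<le> m" for i
    proof -
      show "c i \<in> g (i - m)" using ctrQ[OF gQ(2)[OF im[OF that]]] that(2) unfolding c_def by simp
      then show "c i \<notin> B" using remP[OF gQ(2)[OF im[OF that]]] by blast
    qed
    have cin: "c i \<in> B" if "i \<in> {1..m}" for i using bB[OF that] that unfolding c_def by simp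
    have Lp: "L i \<subseteq> g (i - m) - {c i} \<and> card (L i) = d i \<and> finite (L i)" if "i \<in> {1..k}" "\<not> i \<le> m" for i
      using lvQ[OF gQ(2)[OF im[OF that]], of "d i"] d1 that unfolding L_def c_def by auto
    have inj: "inj_on c {1..k}"
    proof (rule inj_onI)
      fix i j assume i: "i \<in> {1..k}" and j: "j \<in> {1..k}" and e: "c i = c j"
      show "i = j"
      proof (cases "i \<le> m")
        case True
        then have i': "i \<in> {1..m}" using i by auto
        show ?thesis
        proof (cases "j \<le> m")
          case True
          then have j': "j \<in> {1..m}" using j by auto
          have "b i = b j" using e i' j' unfolding c_def by simp
          then show ?thesis by (rule inj_onD[OF binj _ i' j'])
        next
          case False
          then show ?thesis using cin[OF i'] cout(2)[OF j False] e by simp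
        qed
      next
        case iF: False
        show ?thesis
        proof (cases "j \<le> m")
          case True
          then have j': "j \<in> {1..m}" using j by auto
          then show ?thesis using cin[OF j'] cout(2)[OF i iF] e by simp
        next
          case False
          have "g (i - m) = g (j - m)"
          proof (rule ccontr)
            assume ne: "g (i - m) \<noteq> g (j - m)"
            have "c i \<in> g (i - m) \<inter> g (j - m)" using cout(1)[OF i iF] cout(1)[OF j False] e by simp
            then show False using disjQ[OF gQ(1)[OF im[OF i iF]] gQ(1)[OF im[OF j False]] ne] by simp
          qed
          then have "i - m = j - m" by (rule inj_onD[OF ginj _ im[OF i iF] im[OF j False]])
          then show ?thesis using iF False by simp
        qed
      qed
    qed
    have "contains_star_forest E k d"
    proof (rule completion[OF G inj, of "{m+1..k}" L])
      show "{m+1..k} \<subseteq> {1..k}" by auto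
      show "\<forall>i\<in>{m+1..k}. finite (L i) \<and> card (L i) = d i \<and> L i \<subseteq> nbr E (c i)"
      proof
        fix i assume i: "i \<in> {m+1..k}"
        then have i1: "i \<in> {1..k}" and i2: "\<not> i \<le> m" by auto
        have "g (i - m) - {c i} \<subseteq> nbr E (c i)"
          using remP[OF gQ(2)[OF im[OF i1 i2]]] cout(1)[OF i1 i2] by blast
        then show "finite (L i) \<and> card (L i) = d i \<and> L i \<subseteq> nbr E (c i)" using Lp[OF i1 i2] by blast
      qed
      show "\<forall>i\<in>{m+1..k}. \<forall>j\<in>{1..k}. c j \<notin> L i"
      proof (intro ballI)
        fix i j assume i: "i \<in> {m+1..k}" and j: "j \<in> {1..k}"
        then have i1: "i \<in> {1..k}" and i2: "\<not> i \<le> m" by auto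
        have Lsub: "L i \<subseteq> g (i - m) - {c i}" using Lp[OF i1 i2] by blast
        have gB: "g (i - m) \<inter> B = {}" using remP[OF gQ(2)[OF im[OF i1 i2]]] by blast
        show "c j \<notin> L i"
        proof (cases "j \<le> m")
          case True
          then have "j \<in> {1..m}" using j by auto
          then show ?thesis using cin Lsub gB by blast
        next
          case jF: False
          show ?thesis
          proof (cases "g (j - m) = g (i - m)")
            case True
            have "i - m = j - m" by (rule inj_onD[OF ginj True[symmetric] im[OF i1 i2] im[OF j jF]])
            then have "i = j" using i2 jF by simp
            then show ?thesis using Lsub by blast
          next
            case False
            then have "g (j - m) \<inter> g (i - m) = {}"
              using disjQ[OF gQ(1)[OF im[OF j jF]] gQ(1)[OF im[OF i1 i2]]] by simp
            then show ?thesis using cout(1)[OF j jF] Lsub by blast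
          qed
        qed
      qed
      show "\<forall>i\<in>{m+1..k}. \<forall>j\<in>{m+1..k}. i \<noteq> j \<longrightarrow> L i \<inter> L j = {}"
      proof (intro ballI impI)
        fix i j assume i: "i \<in> {m+1..k}" and j: "j \<in> {m+1..k}" and ij: "i \<noteq> j"
        then have i1: "i \<in> {1..k}" and i2: "\<not> i \<le> m" and j1: "j \<in> {1..k}" and j2: "\<not> j \<le> m" by auto
        have "i - m \<noteq> j - m" using ij i2 j2 by simp
        then have "g (i - m) \<noteq> g (j - m)" using inj_onD[OF ginj _ im[OF i1 i2] im[OF j1 j2]] by blast
        then have "g (i - m) \<inter> g (j - m) = {}" using disjQ[OF gQ(1)[OF im[OF i1 i2]] gQ(1)[OF im[OF j1 j2]]] by simp
        then show "L i \<inter> L j = {}" using Lp[OF i1 i2] Lp[OF j1 j2] by blast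
      qed
      show "\<forall>i\<in>{1..k}-{m+1..k}. k + (\<Sum>j\<in>{1..k}. d j) \<le> card (nbr E (c i))"
      proof
        fix i assume i: "i \<in> {1..k}-{m+1..k}"
        then have "i \<in> {1..m}" by auto
        then show "k + (\<Sum>j\<in>{1..k}. d j) \<le> card (nbr E (c i))" using cin unfolding B_def D_def by blast
      qed
    qed
    then show False using nc by simp
  qed
  have meet: "\<exists>Q'\<in>QQ. Q \<inter> Q' \<noteq> {}" if Q: "Q \<in> Rem" for Q
  proof (rule ccontr)
    assume nm: "\<not> ?thesis"
    have "card Q > 0" using remP[OF Q] by linarith
    then have "Q \<noteq> {}" by auto
    then have QnQ: "Q \<notin> QQ" using nm by blast
    have "insert Q QQ \<in> Fam"
      unfolding Fam_def using QQsub Q QQpd nm by (auto simp: pairwise_insert disjnt_def Int_commute)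
    then have "card (insert Q QQ) \<le> M" by (rule Mmax)
    moreover have "card (insert Q QQ) = M + 1" using QnQ finQQ QQ(2) by simp
    ultimately show False by simp
  qed
  define U where "U = \<Union>QQ"
  have cardQ: "card Q \<le> D" if "Q \<in> QQ" for Q
  proof -
    have QR: "Q \<in> Rem" using that QQsub by blast
    have "card Q > 0" using remP[OF QR] by linarith
    then obtain x where x: "x \<in> Q" by (metis card.empty ex_in_conv less_irrefl)
    have xnB: "x \<in> {0..<n}" "x \<notin> B" using remP[OF QR] x by auto
    then have cn: "card (nbr E x) < D" unfolding B_def by auto
    have "Q \<subseteq> insert x (nbr E x)" using remP[OF QR] x by blast
    then have "card Q \<le> card (insert x (nbr E x))" by (rule card_mono[rotated]) (simp add: nbr_fin[OF G])
    also have "\<dots> \<le> Suc (card (nbr E x))" by (simp add: card_insert_le_m1 card_insert_if nbr_fin[OF G])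
    finally show ?thesis using cn by linarith
  qed
  have cardU: "card U \<le> k * (D + 1)"
  proof -
    have "card U \<le> (\<Sum>Q\<in>QQ. card Q)" unfolding U_def by (rule card_Union_le_sum_card)
    also have "\<dots> \<le> (\<Sum>Q\<in>QQ. D)" by (rule sum_mono) (rule cardQ)
    also have "\<dots> = card QQ * D" by simp
    also have "\<dots> \<le> k * (D + 1)" using fewQ by (intro mult_mono) auto
    finally show ?thesis .
  qed
  have finU: "finite U" unfolding U_def using finQQ remP QQsub by blast
  define P where "P = (\<lambda>u. Pow (B \<union> insert u (nbr E u)))"
  have cover: "cliq n E r \<subseteq> (\<Union>u\<in>U. P u)"
  proof
    fix S assume S: "S \<in> cliq n E r"
    then have "S - B \<in> Rem" unfolding Rem_def by blast
    then obtain Q' where Q': "Q' \<in> QQ" "(S - B) \<inter> Q' \<noteq> {}" using meet by blast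
    then obtain u where u: "u \<in> S - B" "u \<in> Q'" by blast
    have "S \<subseteq> B \<union> insert u (nbr E u)" using cliq_nbr[OF S, of u] u(1) by blast
    moreover have "u \<in> U" using u Q' unfolding U_def by blast
    ultimately show "S \<in> (\<Union>u\<in>U. P u)" unfolding P_def by blast
  qed
  have cP: "card (P u) \<le> 2 ^ (k + D)" if uU: "u \<in> U" for u
  proof -
    obtain Q where Q: "Q \<in> QQ" "u \<in> Q" using uU unfolding U_def by blast
    have "u \<in> {0..<n}" "u \<notin> B" using remP QQsub Q by blast+
    then have cn: "card (nbr E u) < D" unfolding B_def by auto
    have fN: "finite (nbr E u)" by (rule nbr_fin[OF G])
    have "card (B \<union> insert u (nbr E u)) \<le> card B + card (insert u (nbr E u))" by (rule card_Un_le)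
    also have "\<dots> \<le> card B + Suc (card (nbr E u))" by (simp add: card_insert_if fN)
    finally have "card (B \<union> insert u (nbr E u)) \<le> k + D" using cn cB by linarith
    moreover have "finite (B \<union> insert u (nbr E u))" using finB fN by simp
    ultimately show ?thesis unfolding P_def
      by (simp add: card_Pow power_increasing)
  qed
  have "card (cliq n E r) \<le> card (\<Union>u\<in>U. P u)"
    by (rule card_mono[OF _ cover]) (simp add: finU P_def finB nbr_fin[OF G])
  also have "\<dots> \<le> (\<Sum>u\<in>U. card (P u))" by (rule card_UN_le[OF finU])
  also have "\<dots> \<le> (\<Sum>u\<in>U. 2 ^ (k + D))" by (rule sum_mono) (rule cP)
  also have "\<dots> = card U * 2 ^ (k + D)" by simp
  also have "\<dots> \<le> k * (D + 1) * 2 ^ (k + D)" using cardU by simp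
  finally show ?thesis .
qed


lemma big_lt_k:
  fixes n k :: nat and d :: "nat \<Rightarrow> nat" and E D B
  defines "D \<equiv> k + (\<Sum>j\<in>{1..k}. d j)"
  defines "B \<equiv> {v\<in>{0..<n}. D \<le> card (nbr E v)}"
  assumes G: "E \<in> graphs_on n" and nc: "\<not> contains_star_forest E k d"
  shows "card B < k"
proof (rule ccontr)
  assume "\<not> ?thesis"
  then obtain T where T: "T \<subseteq> B" "card T = k" "finite T"
    by (meson not_less obtain_subset_with_card_n)
  obtain h where h: "bij_betw h {1..k} T" using ex_bij_betw_nat_finite_1[OF T(3)] T(2) by auto
  have inj: "inj_on h {1..k}" using h unfolding bij_betw_def by simp
  have "contains_star_forest E k d"
  proof (rule completion[OF G inj, of "{}" "\<lambda>i. {}"])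
    show "\<forall>i\<in>{1..k}-{}. k + (\<Sum>j\<in>{1..k}. d j) \<le> card (nbr E (h i))"
    proof
      fix i assume "i \<in> {1..k}-{}"
      then have "h i \<in> B" using bij_betw_apply[OF h] T(1) by blast
      then show "k + (\<Sum>j\<in>{1..k}. d j) \<le> card (nbr E (h i))" unfolding B_def D_def by blast
    qed
  qed auto
  then show False using nc by simp
qed

lemma d_mono:
  assumes "\<forall>i\<in>{1..<k}. d i \<ge> d (Suc i)"
  shows "j \<in> {1..k} \<Longrightarrow> d j \<le> (d 1 :: nat)"
proof (induction j)
  case 0 then show ?case by simp
next
  case (Suc j)
  show ?case
  proof (cases "j = 0")
    case True then show ?thesis by simp
  next
    case False
    then have j: "j \<in> {1..<k}" "j \<in> {1..k}" using Suc.prems by auto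
    have "d (Suc j) \<le> d j" using assms j(1) by blast
    also have "\<dots> \<le> d 1" using Suc.IH j(2) by blast
    finally show ?thesis .
  qed
qed

lemma bound_n:
  fixes k r :: nat and d :: "nat \<Rightarrow> nat" and E
  assumes k2: "k \<ge> 2"
    and mono: "\<forall>i\<in>{1..<k}. d i \<ge> d (Suc i)"
    and dk: "d k \<ge> 2"
    and r: "r \<ge> d 1 + k - 1"
    and n: "n \<ge> k * (k + (\<Sum>j\<in>{1..k}. d j) + 1) * 2 ^ (k + (k + (\<Sum>j\<in>{1..k}. d j))) * (r - k + 1) + k"
    and G: "E \<in> graphs_on n" and nc: "\<not> contains_star_forest E k d"
  shows "real (num_cliques n E r) \<le> (real (d k) - 1) / (real r - real k + 1) * (real n - real k + 1)"
proof -
  define D where "D = k + (\<Sum>j\<in>{1..k}. d j)"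
  define B where "B = {v\<in>{0..<n}. D \<le> card (nbr E v)}"
  define C0 where "C0 = k * (D + 1) * 2 ^ (k + D)"
  have d1: "\<forall>j\<in>{1..k}. d j \<le> d 1" using d_mono[OF mono] by blast
  have dk1: "d k \<le> d 1" using d1 k2 by simp
  have cB: "card B < k" unfolding B_def D_def by (rule big_lt_k[OF G nc])
  have rk: "real r - real k + 1 = real (r - k + 1)" using r dk1 dk k2 by (simp add: of_nat_diff)
  have Rpos: "real (r - k + 1) > 0" by simp
  have nk: "real n - real k + 1 = real (n - k + 1)" using n by (simp add: of_nat_diff)
  define R where "R = real (r - k + 1)"
  define N where "N = real (n - k + 1)"
  have N0: "0 \<le> N" unfolding N_def by simp
  have dk1r: "1 \<le> real (d k) - 1" using dk by simp
  have NN: "N \<le> (real (d k) - 1) * N" using mult_right_mono[OF dk1r N0] by simp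
  have RP: "0 < R" unfolding R_def by simp
  have DIV: "x \<le> (real (d k) - 1) / R * N" if "x * R \<le> (real (d k) - 1) * N" for x
  proof -
    have "(real (d k) - 1) / R * N = ((real (d k) - 1) * N) / R" by simp
    moreover have "x \<le> ((real (d k) - 1) * N) / R" using that by (subst pos_le_divide_eq[OF RP])
    ultimately show ?thesis by simp
  qed
  have goal: "real (card (cliq n E r)) \<le> (real (d k) - 1) / R * N"
  proof (cases "card B = k - 1")
    case True
    have ce: "card (cliq n E r) * d k \<le> n - (k - 1) \<and> (cliq n E r \<noteq> {} \<longrightarrow> r = d k + k - 1)"
      using case_eq[OF G nc k2 _ dk dk1 r] True unfolding B_def D_def by blast
    show ?thesis
    proof (cases "cliq n E r = {}")
      case True
      have "0 \<le> (real (d k) - 1) / R * N" using dk unfolding R_def N_def by simp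
      then show ?thesis using True by simp
    next
      case False
      then have re: "r = d k + k - 1" using ce by blast
      then have "r - k + 1 = d k" using k2 dk by simp
      then have R: "R = real (d k)" unfolding R_def by simp
      have nn: "n - (k - 1) = n - k + 1" using n k2 by simp
      have "real (card (cliq n E r)) * real (d k) \<le> N"
        using ce nn unfolding N_def by (metis of_nat_le_iff of_nat_mult)
      moreover have "N \<le> (real (d k) - 1) * N" by (rule NN)
      ultimately have "real (card (cliq n E r)) * real (d k) \<le> (real (d k) - 1) * N" by linarith
      then have "real (card (cliq n E r)) * R \<le> (real (d k) - 1) * N" using R by simp
      then show ?thesis by (rule DIV)
    qed
  next
    case False
    then have cB': "card B < k - 1" using cB by simp
    have "card (cliq n E r) \<le> C0"
      using case_lt[OF G nc k2 _ d1 r] cB' unfolding B_def D_def C0_def by blast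
    then have c1: "real (card (cliq n E r)) \<le> real C0" by simp
    have "C0 * (r - k + 1) \<le> n - k + 1" using n unfolding C0_def D_def by simp
    then have "real C0 * R \<le> N" unfolding R_def N_def by (metis of_nat_le_iff of_nat_mult)
    moreover have "N \<le> (real (d k) - 1) * N" by (rule NN)
    ultimately have "real C0 * R \<le> (real (d k) - 1) * N" by linarith
    then have "real C0 \<le> (real (d k) - 1) / R * N" by (rule DIV)
    then show ?thesis using c1 by linarith
  qed
  show ?thesis unfolding num_cliques_eq rk nk using goal unfolding R_def N_def .
qed

theorem corollary6p1:
  fixes k r :: nat and d :: "nat \<Rightarrow> nat"
  assumes "k \<ge> 2"
    and "\<forall>i\<in>{1..<k}. d i \<ge> d (Suc i)"
    and "d k \<ge> 2"
    and "r \<ge> d 1 + k - 1"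
  shows "\<forall>\<^sub>F n in sequentially.
           real (ex_clique_starforest n r k d)
             \<le> Max ((\<lambda>i. (real (d i) - 1) / (real r - real i + 1) * (real n - real i + 1)) ` {1..k})"
proof -
  define N0 where "N0 = k * (k + (\<Sum>j\<in>{1..k}. d j) + 1) * 2 ^ (k + (k + (\<Sum>j\<in>{1..k}. d j))) * (r - k + 1) + k"
  show ?thesis
  proof (rule eventually_sequentiallyI[of N0])
    fix n assume n: "N0 \<le> n"
    define W where "W = {num_cliques n E r | E. E \<in> graphs_on n \<and> \<not> contains_star_forest E k d}"
    have W: "W = (\<lambda>E. num_cliques n E r) ` {E. E \<in> graphs_on n \<and> \<not> contains_star_forest E k d}"
      unfolding W_def by blast
    have "graphs_on n \<subseteq> Pow (Pow {0..<n})" unfolding graphs_on_def by auto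
    then have "finite (graphs_on n)" by (rule finite_subset) simp
    then have finW: "finite W" unfolding W by simp
    have e0: "{} \<in> graphs_on n" unfolding graphs_on_def by simp
    have e1: "\<not> contains_star_forest {} k d"
    proof
      assume "contains_star_forest {} k d"
      then obtain c L where cl: "\<forall>i\<in>{1..k}. finite (L i) \<and> card (L i) = d i \<and> (\<forall>x\<in>L i. {c i, x} \<in> ({}::nat set set))"
        unfolding contains_star_forest_def by blast
      have one: "(1::nat) \<in> {1..k}" using assms(1) by simp
      have h1: "card (L 1) = d 1" by (rule conjunct1[OF conjunct2[OF bspec[OF cl one]]])
      have h2: "L 1 = {}" using bspec[OF cl one] by auto
      have h3: "d 1 \<ge> 2" using d_mono[OF assms(2), of k] assms(1,3) by simp
      show False using h1 h2 h3 by simp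
    qed
    have neW: "W \<noteq> {}" unfolding W_def using e0 e1 by blast
    have "Max W \<in> W" using Max_in[OF finW neW] .
    then obtain E where E: "E \<in> graphs_on n" "\<not> contains_star_forest E k d" "Max W = num_cliques n E r"
      unfolding W_def by blast
    have "real (ex_clique_starforest n r k d) = real (num_cliques n E r)"
      unfolding ex_clique_starforest_def using E(3) W_def by simp
    also have "\<dots> \<le> (real (d k) - 1) / (real r - real k + 1) * (real n - real k + 1)"
      by (rule bound_n[OF assms _ E(1,2)]) (use n N0_def in simp)
    also have "\<dots> \<le> Max ((\<lambda>i. (real (d i) - 1) / (real r - real i + 1) * (real n - real i + 1)) ` {1..k})"
      using assms(1) by (intro Max_ge) auto
    finally show "real (ex_clique_starforest n r k d)
             \<le> Max ((\<lambda>i. (real (d i) - 1) / (real r - real i + 1) * (real n - real i + 1)) ` {1..k})" .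
  qed
qed

end
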